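(* Let $n\ge 3$, let $F$ be a set of edges of $Q_n$, and let $T$ be a proper subset of the vertex set of $Q_n$ with $|T|\ge 3$ and $|T|_0\ge|T|_1$, such that every edge of $Q_n$ joining a vertex of parity 0 in $T$ to a vertex outside $T$ belongs to $F$. Suppose $T$ is partitioned into two sets $T_1,T_2$, each inducing a connected subgraph of $Q_n$ and each balanced ($|T_j|_0=|T_j|_1$ for $j=1,2$), and suppose there are adjacent vertices $v_1\in T_1$, $v_2\in T_2$ such that every path in the subgraph induced by $T$ from $v_1$ to $v_2$ uses the edge $(v_1,v_2)$. Then $F$ is not minimal.
   Context: $Q_n$ is the $n$-dimensional hypercube on the binary strings of length $n$, two strings adjacent iff they differ in exactly one bit. The parity of a vertex is the number of ones in its label modulo 2. For a set $T$ of vertices, $|T|_0$ and $|T|_1$ denote the numbers of vertices of parity 0 and parity 1 in $T$. $F$ is a set of "faulty" edges; $Q_n-F$ is the graph with all vertices of $Q_n$ and the edges of $Q_n$ not in $F$. "$F$ is not minimal" means that there is a proper subset $F'\subsetneq F$ such that $Q_n-F'$ has no Hamiltonian cycle. *)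

theory Defs
  imports Main
begin

text \<open>Vertices of Q_n: binary strings of length n, encoded as bool lists (True = 1).\<close>

definition hverts :: "nat \<Rightarrow> bool list set" where
  "hverts n = {xs. length xs = n}"

definition hadj :: "bool list \<Rightarrow> bool list \<Rightarrow> bool" where
  "hadj u v \<longleftrightarrow> length u = length v \<and> card {i. i < length u \<and> u ! i \<noteq> v ! i} = 1"

definition hedges :: "nat \<Rightarrow> bool list set set" where
  "hedges n = {{u, v} | u v. u \<in> hverts n \<and> v \<in> hverts n \<and> hadj u v}"

definition parity :: "bool list \<Rightarrow> nat" where
  "parity u = count_list u True mod 2"

definition card0 :: "bool list set \<Rightarrow> nat" where
  "card0 T = card {u \<in> T. parity u = 0}"

definition card1 :: "bool list set \<Rightarrow> nat" where
  "card1 T = card {u \<in> T. parity u = 1}"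

definition ham_cycle :: "nat \<Rightarrow> bool list set set \<Rightarrow> bool list list \<Rightarrow> bool" where
  "ham_cycle n F cyc \<longleftrightarrow>
     distinct cyc \<and> set cyc = hverts n \<and> length cyc \<ge> 3 \<and>
     (\<forall>i < length cyc. hadj (cyc ! i) (cyc ! ((i + 1) mod length cyc)) \<and>
                       {cyc ! i, cyc ! ((i + 1) mod length cyc)} \<notin> F)"

definition has_ham_cycle :: "nat \<Rightarrow> bool list set set \<Rightarrow> bool" where
  "has_ham_cycle n F \<longleftrightarrow> (\<exists>cyc. ham_cycle n F cyc)"

definition not_minimal :: "nat \<Rightarrow> bool list set set \<Rightarrow> bool" where
  "not_minimal n F \<longleftrightarrow> (\<exists>F'. F' \<subset> F \<and> \<not> has_ham_cycle n F')"

definition ipath :: "bool list set \<Rightarrow> bool list list \<Rightarrow> bool" where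
  "ipath S p \<longleftrightarrow> p \<noteq> [] \<and> distinct p \<and> set p \<subseteq> S \<and>
     (\<forall>i. Suc i < length p \<longrightarrow> hadj (p ! i) (p ! Suc i))"

definition uses_edge :: "bool list list \<Rightarrow> bool list \<Rightarrow> bool list \<Rightarrow> bool" where
  "uses_edge p a b \<longleftrightarrow> (\<exists>i. Suc i < length p \<and> {p ! i, p ! Suc i} = {a, b})"

definition induces_connected :: "bool list set \<Rightarrow> bool" where
  "induces_connected S \<longleftrightarrow> S \<noteq> {} \<and>
     (\<forall>u\<in>S. \<forall>v\<in>S. \<exists>p. ipath S p \<and> hd p = u \<and> last p = v)"

end

theory Submission
  imports Defs
begin


definition flip :: "bool list \<Rightarrow> nat \<Rightarrow> bool list" where
  "flip u i = u[i := \<not> u!i]"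

lemma length_flip[simp]: "length (flip u i) = length u"
  by (simp add: flip_def)

lemma hadj_flip: assumes "i < length u" shows "hadj u (flip u i)"
proof -
  have "{j. j < length u \<and> u ! j \<noteq> flip u i ! j} = {i}"
    using assms by (auto simp: flip_def nth_list_update split: if_splits)
  thus ?thesis by (simp add: hadj_def)
qed

lemma hadj_iff: "hadj u v \<longleftrightarrow> (\<exists>i<length u. v = flip u i)"
proof
  assume h: "hadj u v"
  then obtain i where S: "{j. j < length u \<and> u ! j \<noteq> v ! j} = {i}"
    by (auto simp: hadj_def card_1_singleton_iff)
  have il: "i < length u" and d: "u!i \<noteq> v!i" using S by auto
  have "v = flip u i"
  proof (rule nth_equalityI)
    show "length v = length (flip u i)" using h by (simp add: hadj_def)
    fix j assume "j < length v"
    hence j: "j < length u" using h by (simp add: hadj_def)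
    show "v ! j = flip u i ! j"
    proof (cases "j = i")
      case True thus ?thesis using d il by (auto simp: flip_def)
    next
      case False
      hence "u ! j = v ! j" using S j by blast
      thus ?thesis using False by (simp add: flip_def)
    qed
  qed
  thus "\<exists>i<length u. v = flip u i" using il by blast
next
  assume "\<exists>i<length u. v = flip u i"
  thus "hadj u v" using hadj_flip by blast
qed

lemma flip_inj: assumes "i < length u" "j < length u" "flip u i = flip u j" shows "i = j"
proof (rule ccontr)
  assume "i \<noteq> j"
  hence "flip u i ! i \<noteq> flip u j ! i" using assms(1,2) by (simp add: flip_def)
  thus False using assms(3) by simp
qed

lemma flip_flip[simp]: "flip (flip u i) i = u"
  by (cases "i < length u") (auto simp: flip_def intro!: nth_equalityI simp: nth_list_update)

lemma flip_comm: "flip (flip u i) j = flip (flip u j) i"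
  by (cases "i = j") (auto simp: flip_def list_update_swap)

lemma flip_neq: "i < length u \<Longrightarrow> flip u i \<noteq> u"
  by (metis flip_def length_list_update nth_list_update_eq)

lemma count_flip: "i < length u \<Longrightarrow>
   count_list (flip u i) True + (if u!i then 1 else 0) = count_list u True + (if u!i then 0 else 1)"
proof (induction u arbitrary: i)
  case Nil thus ?case by simp
next
  case (Cons a u)
  show ?case
  proof (cases i)
    case 0 thus ?thesis by (simp add: flip_def)
  next
    case (Suc k)
    have "flip (a # u) i = a # flip u k" using Suc by (simp add: flip_def)
    thus ?thesis using Cons.IH[of k] Cons.prems Suc by auto
  qed
qed

lemma parity_le: "parity u \<le> 1" by (simp add: parity_def)

lemma mod2_aux: "(a::nat) + 1 = b \<or> a = b + 1 \<Longrightarrow> a mod 2 \<noteq> b mod 2"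
  by (elim disjE) (auto simp: mod_Suc split: if_splits)

lemma parity_flip: "i < length u \<Longrightarrow> parity (flip u i) \<noteq> parity u"
proof -
  assume "i < length u"
  from count_flip[OF this]
  have "count_list (flip u i) True + 1 = count_list u True \<or> count_list (flip u i) True = count_list u True + 1"
    by (cases "u!i") (simp_all only: if_True if_False; linarith)+
  thus ?thesis unfolding parity_def by (rule mod2_aux)
qed

lemma hadj_parity: "hadj u v \<Longrightarrow> parity v \<noteq> parity u"
  unfolding hadj_iff using parity_flip by auto

lemma hadj_par0: "hadj u v \<Longrightarrow> parity u = 0 \<Longrightarrow> parity v = 1"
  using hadj_parity[of u v] parity_le[of v] by linarith
lemma hadj_par1: "hadj u v \<Longrightarrow> parity u = 1 \<Longrightarrow> parity v = 0"
  using hadj_parity[of u v] parity_le[of v] by linarith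

lemma hadj_sym: "hadj u v \<Longrightarrow> hadj v u"
  by (metis flip_flip hadj_iff length_flip)

lemma hadj_len: "hadj u v \<Longrightarrow> length v = length u"
  by (simp add: hadj_def)

lemma nbrs: "length x = n \<Longrightarrow> {y \<in> hverts n. hadj x y} = flip x ` {..<n}"
  by (auto simp: hverts_def hadj_iff)

lemma card_nbrs: "length x = n \<Longrightarrow> card {y \<in> hverts n. hadj x y} = n"
  apply (simp add: nbrs)
  apply (subst card_image)
   apply (auto intro!: inj_onI intro: flip_inj)
  done

lemma finite_hverts: "finite (hverts n)"
proof -
  have "hverts n = {xs. set xs \<subseteq> UNIV \<and> length xs = n}" by (simp add: hverts_def)
  thus ?thesis using finite_lists_length_eq[of "UNIV::bool set" n] by simp
qed


lemma no_ham:
  assumes Sv: "S \<subseteq> hverts n" and Sne: "S \<noteq> hverts n" and Sne2: "S \<noteq> {}"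
    and bal: "card0 S = card1 S"
    and cl: "\<forall>u\<in>S. \<forall>w\<in>hverts n - S. parity u = 0 \<longrightarrow> hadj u w \<longrightarrow> {u,w} \<in> F'"
  shows "\<not> has_ham_cycle n F'"
proof
  assume "has_ham_cycle n F'"
  then obtain cyc where hc: "ham_cycle n F' cyc" by (auto simp: has_ham_cycle_def)
  define L where "L = length cyc"
  define c where "c = (\<lambda>i. cyc ! i)"
  define s where "s = (\<lambda>i. Suc i mod L)"
  define p where "p = (\<lambda>i. (i + L - 1) mod L)"
  have L3: "L \<ge> 3" and dist: "distinct cyc" and setc: "set cyc = hverts n"
    and edge: "\<And>i. i < L \<Longrightarrow> hadj (c i) (c (s i)) \<and> {c i, c (s i)} \<notin> F'"
    using hc by (auto simp: ham_cycle_def L_def c_def s_def)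
  have sL: "s i < L" for i using L3 by (simp add: s_def)
  have pL: "p i < L" for i using L3 by (simp add: p_def)
  have sp: "s (p i) = i" if "i < L" for i
  proof -
    have "s (p i) = Suc (i + L - 1) mod L" unfolding s_def p_def by (simp add: mod_Suc_eq)
    also have "Suc (i + L - 1) = i + L" using L3 by simp
    finally show ?thesis using that by simp
  qed
  have ps: "p (s i) = i" if "i < L" for i
  proof (cases "Suc i = L")
    case True thus ?thesis unfolding s_def p_def using L3 by simp
  next
    case False
    hence "Suc i < L" using that by simp
    hence "s i = Suc i" unfolding s_def by simp
    moreover have "Suc i + L - 1 = i + L" by simp
    ultimately show ?thesis unfolding p_def using that by simp
  qed
  have cin: "c i \<in> hverts n" if "i < L" for i
    using setc that by (auto simp: c_def L_def)
  have cinj: "inj_on c {..<L}" using dist by (auto simp: inj_on_def c_def L_def nth_eq_iff_index_eq)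
  have csurj: "\<exists>i<L. c i = u" if "u \<in> hverts n" for u
    using setc that by (auto simp: c_def L_def in_set_conv_nth)
  define P0 where "P0 = {i. i<L \<and> c i \<in> S \<and> parity (c i) = 0}"
  define P1 where "P1 = {i. i<L \<and> c i \<in> S \<and> parity (c i) = 1}"
  have fin0: "finite P0" and fin1: "finite P1" by (auto simp: P0_def P1_def)
  have im0: "c ` P0 = {u\<in>S. parity u = 0}"
    using csurj Sv by (auto simp: P0_def)
  have im1: "c ` P1 = {u\<in>S. parity u = 1}"
    using csurj Sv by (auto simp: P1_def)
  have cP0: "card P0 = card0 S"
    unfolding card0_def im0[symmetric]
    by (rule card_image[symmetric], rule inj_on_subset[OF cinj]) (auto simp: P0_def)
  have cP1: "card P1 = card1 S"
    unfolding card1_def im1[symmetric]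
    by (rule card_image[symmetric], rule inj_on_subset[OF cinj]) (auto simp: P1_def)
  have A: "s i \<in> P1" if "i \<in> P0" for i
  proof -
    have i: "i < L" "c i \<in> S" "parity (c i) = 0" using that by (auto simp: P0_def)
    have e: "hadj (c i) (c (s i))" "{c i, c (s i)} \<notin> F'" using edge[OF i(1)] by auto
    have "c (s i) \<in> S"
    proof (rule ccontr)
      assume "c (s i) \<notin> S"
      hence "c (s i) \<in> hverts n - S" using cin[OF sL] by auto
      thus False using cl i e by blast
    qed
    thus ?thesis using hadj_par0[OF e(1) i(3)] sL by (auto simp: P1_def)
  qed
  have B: "p i \<in> P1" if "i \<in> P0" for i
  proof -
    have i: "i < L" "c i \<in> S" "parity (c i) = 0" using that by (auto simp: P0_def)
    have e: "hadj (c (p i)) (c i)" "{c (p i), c i} \<notin> F'" using edge[OF pL[of i]] sp[OF i(1)] by auto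
    have e2: "hadj (c i) (c (p i))" "{c i, c (p i)} \<notin> F'" using e hadj_sym by (auto simp: insert_commute)
    have "c (p i) \<in> S"
    proof (rule ccontr)
      assume "c (p i) \<notin> S"
      hence "c (p i) \<in> hverts n - S" using cin[OF pL] by auto
      thus False using cl i e2 by blast
    qed
    thus ?thesis using hadj_par0[OF e2(1) i(3)] pL by (auto simp: P1_def)
  qed
  have pinj: "inj_on p P0"
    by (rule inj_onI) (metis P0_def mem_Collect_eq sp)
  have pim: "p ` P0 = P1"
  proof (rule card_subset_eq[OF fin1])
    show "p ` P0 \<subseteq> P1" using B by auto
    show "card (p ` P0) = card P1" using card_image[OF pinj] cP0 cP1 bal by simp
  qed
  have clos: "c (s i) \<in> S" if "i < L" "c i \<in> S" for i
  proof (cases "parity (c i) = 0")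
    case True
    hence "i \<in> P0" using that by (simp add: P0_def)
    thus ?thesis using A by (simp add: P1_def)
  next
    case False
    hence "parity (c i) = 1" using parity_le[of "c i"] by linarith
    hence "i \<in> P1" using that by (simp add: P1_def)
    then obtain j where "j \<in> P0" "i = p j" using pim by auto
    hence "s i = j" using sp by (simp add: P0_def ps)
    thus ?thesis using \<open>j \<in> P0\<close> by (simp add: P0_def)
  qed
  obtain u where "u \<in> S" using Sne2 by auto
  then obtain i0 where i0: "i0 < L" "c i0 \<in> S" using csurj Sv by blast
  have all: "c ((i0 + k) mod L) \<in> S" for k
  proof (induction k)
    case 0 thus ?case using i0 by simp
  next
    case (Suc k)
    have "(i0 + Suc k) mod L = s ((i0 + k) mod L)" by (simp add: s_def mod_Suc_eq)
    thus ?case using clos[OF _ Suc] L3 by simp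
  qed
  have "hverts n \<subseteq> S"
  proof
    fix u assume "u \<in> hverts n"
    then obtain j where j: "j < L" "c j = u" using csurj by blast
    have "(i0 + (j + L - i0)) mod L = j" using i0 j by simp
    thus "u \<in> S" using all[of "j + L - i0"] j by simp
  qed
  thus False using Sv Sne by auto
qed




lemma card_filter_sum: "finite B \<Longrightarrow> card {y\<in>B. P y} = (\<Sum>y\<in>B. if P y then 1 else (0::nat))"
  by (simp add: sum.If_cases Int_def)

lemma dcount: "finite A \<Longrightarrow> finite B \<Longrightarrow>
   (\<Sum>x\<in>A. card {y\<in>B. R x y}) = (\<Sum>y\<in>B. card {x\<in>A. R x y})"
  by (simp add: card_filter_sum) (rule sum.swap)

lemma count_contra:
  assumes n3: "n \<ge> 3" and Av: "A \<subseteq> hverts n" and bal: "card0 A = card1 A"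
    and a: "a \<in> A" "parity a = 0" and b: "b \<notin> A" "hadj a b"
    and H: "\<forall>x\<in>A. parity x = 0 \<longrightarrow> (\<forall>w\<in>hverts n. hadj x w \<longrightarrow> w \<in> A \<or> (x = a \<and> w = b))"
  shows False
proof -
  have la: "length a = n" using a Av by (auto simp: hverts_def)
  obtain i where i: "i < n" "b = flip a i" using b(2) la by (auto simp: hadj_iff)
  have bv: "b \<in> hverts n" using i la by (simp add: hverts_def)
  obtain j1 j2 where j: "j1 < n" "j2 < n" "j1 \<noteq> i" "j2 \<noteq> i" "j1 \<noteq> j2"
  proof (cases "i = 0")
    case True thus ?thesis using that[of 1 2] n3 by simp
  next
    case False
    show ?thesis
    proof (cases "i = 1")
      case True thus ?thesis using that[of 0 2] n3 by simp
    next
      case False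
      thus ?thesis using that[of 0 1] n3 \<open>i \<noteq> 0\<close> by simp
    qed
  qed
  have ykey: "flip a j \<in> A \<and> parity (flip a j) = 1 \<and> flip (flip a j) i \<notin> A
     \<and> hadj (flip a j) (flip (flip a j) i) \<and> flip (flip a j) i \<in> hverts n" if jj: "j < n" "j \<noteq> i" for j
  proof -
    have hv: "flip a j \<in> hverts n" using la that by (simp add: hverts_def)
    have h: "hadj a (flip a j)" using hadj_flip la that by simp
    have ne: "flip a j \<noteq> b" using i flip_inj la that by metis
    have yA: "flip a j \<in> A" using H a hv h ne by blast
    have py: "parity (flip a j) = 1" using hadj_par0[OF h a(2)] .
    define z where "z = flip (flip a j) i"
    have hz: "hadj (flip a j) z" unfolding z_def using hadj_flip la i by simp
    have pz: "parity z = 0" using hadj_par1[OF hz py] .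
    have "flip z j = b" unfolding z_def i(2) by (metis flip_comm flip_flip)
    hence zb: "hadj z b" using hadj_flip[of j z] la jj by (simp add: z_def)
    have zv: "z \<in> hverts n" using la by (simp add: z_def hverts_def)
    have "z \<notin> A"
    proof
      assume "z \<in> A"
      hence "b \<in> A \<or> z = a" using H pz bv zb by blast
      hence "z = a" using b by blast
      hence "flip a j = flip a i" unfolding z_def by (metis flip_flip)
      thus False using flip_inj la jj i by metis
    qed
    thus ?thesis using yA py hz zv by (simp add: z_def)
  qed
  define y1 where "y1 = flip a j1"
  define y2 where "y2 = flip a j2"
  define z1 where "z1 = flip y1 i"
  define z2 where "z2 = flip y2 i"
  have k1: "y1 \<in> A" "parity y1 = 1" "z1 \<notin> A" "hadj y1 z1" "z1 \<in> hverts n"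
    using ykey[OF j(1,3)] by (auto simp: y1_def z1_def)
  have k2: "y2 \<in> A" "parity y2 = 1" "z2 \<notin> A" "hadj y2 z2" "z2 \<in> hverts n"
    using ykey[OF j(2,4)] by (auto simp: y2_def z2_def)
  have y12: "y1 \<noteq> y2" using flip_inj la j unfolding y1_def y2_def by metis
  define S0 where "S0 = {x\<in>A. parity x = 0}"
  define S1 where "S1 = {x\<in>A. parity x = 1}"
  have finA: "finite A" using Av finite_hverts finite_subset by blast
  have f0: "finite S0" and f1: "finite S1" using finA by (auto simp: S0_def S1_def)
  define k where "k = card S0"
  have k1c: "card S1 = k" using bal by (simp add: k_def S0_def S1_def card0_def card1_def)
  have aS0: "a \<in> S0" using a by (simp add: S0_def)
  have yS1: "y1 \<in> S1" "y2 \<in> S1" using k1 k2 by (auto simp: S1_def)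
  have cl: "card {y\<in>S1. hadj x y} = n" if "x \<in> S0 - {a}" for x
  proof -
    have "{y\<in>S1. hadj x y} = {y\<in>hverts n. hadj x y}"
      using that H Av hadj_par0 by (auto simp: S0_def S1_def)
    moreover have "length x = n" using that Av by (auto simp: S0_def hverts_def)
    ultimately show ?thesis using card_nbrs[of x n] by simp
  qed
  have ca: "card {y\<in>S1. hadj a y} = n - 1"
  proof -
    have "{y\<in>S1. hadj a y} = {y\<in>hverts n. hadj a y} - {b}"
      using H Av a b hadj_par0 by (auto simp: S0_def S1_def)
    moreover have "b \<in> {y\<in>hverts n. hadj a y}" using bv b by simp
    ultimately show ?thesis using card_nbrs[OF la] finite_hverts by (simp add: card_Diff_singleton)
  qed
  have sumL: "(\<Sum>x\<in>S0. card {y\<in>S1. hadj x y}) = (n - 1) + n * (k - 1)"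
  proof -
    have "(\<Sum>x\<in>S0. card {y\<in>S1. hadj x y}) = card {y\<in>S1. hadj a y} + (\<Sum>x\<in>S0 - {a}. card {y\<in>S1. hadj x y})"
      using sum.remove[OF f0 aS0] by simp
    also have "(\<Sum>x\<in>S0 - {a}. card {y\<in>S1. hadj x y}) = (\<Sum>x\<in>S0 - {a}. n)"
      using cl by (rule sum.cong[OF refl])
    also have "\<dots> = n * (k - 1)" using f0 aS0 by (simp add: k_def)
    finally show ?thesis using ca by simp
  qed
  have dle: "card {x\<in>S0. hadj x y} \<le> n" if "y \<in> S1" for y
  proof -
    have "{x\<in>S0. hadj x y} \<subseteq> {x\<in>hverts n. hadj y x}" using Av hadj_sym by (auto simp: S0_def)
    moreover have "length y = n" using that Av by (auto simp: S1_def hverts_def)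
    moreover have "finite {x\<in>hverts n. hadj y x}" using finite_hverts by simp
    ultimately show ?thesis using card_nbrs[of y n] card_mono by metis
  qed
  have dlez: "card {x\<in>S0. hadj x y} \<le> n - 1" if "y \<in> S1" "z \<notin> A" "hadj y z" "z \<in> hverts n" for y z
  proof -
    have "{x\<in>S0. hadj x y} \<subseteq> {x\<in>hverts n. hadj y x} - {z}" using Av hadj_sym that by (auto simp: S0_def)
    moreover have "length y = n" using that Av by (auto simp: S1_def hverts_def)
    moreover have "card ({x\<in>hverts n. hadj y x} - {z}) = n - 1"
      using card_nbrs[OF calculation(2)] that finite_hverts by (simp add: card_Diff_singleton)
    moreover have "finite ({x\<in>hverts n. hadj y x} - {z})" using finite_hverts by simp
    ultimately show ?thesis using card_mono by metis
  qed
  have sumR: "(\<Sum>y\<in>S1. card {x\<in>S0. hadj x y}) \<le> (n - 1) + (n - 1) + n * (k - 2)"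
  proof -
    have "(\<Sum>y\<in>S1. card {x\<in>S0. hadj x y}) = card {x\<in>S0. hadj x y1} + (\<Sum>y\<in>S1 - {y1}. card {x\<in>S0. hadj x y})"
      using sum.remove[OF f1 yS1(1)] by simp
    also have "(\<Sum>y\<in>S1 - {y1}. card {x\<in>S0. hadj x y}) = card {x\<in>S0. hadj x y2} + (\<Sum>y\<in>S1 - {y1} - {y2}. card {x\<in>S0. hadj x y})"
      using sum.remove[of "S1 - {y1}" y2] f1 yS1 y12 by simp
    also have "(\<Sum>y\<in>S1 - {y1} - {y2}. card {x\<in>S0. hadj x y}) \<le> (\<Sum>y\<in>S1 - {y1} - {y2}. n)"
      by (rule sum_mono) (use dle in auto)
    also have "\<dots> = card (S1 - {y1} - {y2}) * n" by simp
    also have "card (S1 - {y1} - {y2}) = k - 2" using f1 yS1 y12 k1c by simp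
    finally show ?thesis using dlez[OF yS1(1) k1(3,4,5)] dlez[OF yS1(2) k2(3,4,5)] by (simp add: mult.commute)
  qed
  have "k \<ge> 2"
  proof -
    have "{y1, y2} \<subseteq> S1" using yS1 by auto
    hence "card {y1,y2} \<le> card S1" using f1 card_mono by blast
    thus ?thesis using y12 k1c by simp
  qed
  then obtain m where m: "k = m + 2" by (metis add.commute le_Suc_ex)
  have "(n - 1) + n * (k - 1) \<le> (n - 1) + (n - 1) + n * (k - 2)"
    using sumL sumR dcount[OF f0 f1, of hadj] by simp
  hence "(n - 1) + n * (m + 1) \<le> (n - 1) + (n - 1) + n * m" using m by simp
  hence "(n - 1) + n * m + n \<le> (n - 1) + (n - 1) + n * m" by (simp add: algebra_simps)
  thus False using n3 by linarith
qed



lemma bridge: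
  assumes disj: "T1 \<inter> T2 = {}" and c1: "induces_connected T1" and c2: "induces_connected T2"
    and v: "v1 \<in> T1" "v2 \<in> T2"
    and P: "\<forall>p. ipath (T1 \<union> T2) p \<and> hd p = v1 \<and> last p = v2 \<longrightarrow> uses_edge p v1 v2"
    and xy: "x \<in> T1" "y \<in> T2" "hadj x y"
  shows "x = v1 \<and> y = v2"
proof -
  obtain p1 where p1: "ipath T1 p1" "hd p1 = v1" "last p1 = x"
    using c1 v xy unfolding induces_connected_def by blast
  obtain p2 where p2: "ipath T2 p2" "hd p2 = y" "last p2 = v2"
    using c2 v xy unfolding induces_connected_def by blast
  define p where "p = p1 @ p2"
  have ne1: "p1 \<noteq> []" and ne2: "p2 \<noteq> []" using p1 p2 by (auto simp: ipath_def)
  have s1: "set p1 \<subseteq> T1" and s2: "set p2 \<subseteq> T2" using p1 p2 by (auto simp: ipath_def)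
  have junc: "p ! (length p1 - 1) = x" "p ! length p1 = y"
    using ne1 ne2 p1(3) p2(2) by (auto simp: p_def nth_append last_conv_nth hd_conv_nth)
  have ip: "ipath (T1 \<union> T2) p"
    unfolding ipath_def
  proof (intro conjI allI impI)
    show "p \<noteq> []" using ne1 by (simp add: p_def)
    have "distinct p1" "distinct p2" using p1(1) p2(1) unfolding ipath_def by blast+
    moreover have "set p1 \<inter> set p2 = {}" using s1 s2 disj by auto
    ultimately show "distinct p" unfolding p_def by (simp only: distinct_append)
    show "set p \<subseteq> T1 \<union> T2" using s1 s2 by (auto simp: p_def)
    fix i assume i: "Suc i < length p"
    consider "Suc i < length p1" | "Suc i = length p1" | "length p1 \<le> i" by linarith
    thus "hadj (p ! i) (p ! Suc i)"
    proof cases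
      case 1
      have "hadj (p1 ! i) (p1 ! Suc i)" using p1(1) 1 unfolding ipath_def by blast
      moreover have "p ! i = p1 ! i" "p ! Suc i = p1 ! Suc i" using 1 by (simp_all add: p_def nth_append)
      ultimately show ?thesis by simp
    next
      case 2 thus ?thesis using junc xy by (metis diff_Suc_1)
    next
      case 3
      hence "p ! i = p2 ! (i - length p1)" "p ! Suc i = p2 ! Suc (i - length p1)"
        "Suc (i - length p1) < length p2"
        using i by (auto simp: p_def nth_append Suc_diff_le)
      moreover have "hadj (p2 ! (i - length p1)) (p2 ! Suc (i - length p1))"
        using p2(1) calculation(3) unfolding ipath_def by blast
      ultimately show ?thesis by simp
    qed
  qed
  have "hd p = v1" "last p = v2" using p1(2) p2(3) ne1 ne2 by (simp_all add: p_def)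
  with ip P obtain i where i: "Suc i < length p" "{p ! i, p ! Suc i} = {v1, v2}"
    unfolding uses_edge_def by blast
  consider "Suc i < length p1" | "Suc i = length p1" | "length p1 \<le> i" by linarith
  thus ?thesis
  proof cases
    case 1
    hence "p ! i = p1 ! i" "p ! Suc i = p1 ! Suc i" "i < length p1" by (simp_all add: p_def nth_append)
    hence "p ! i \<in> T1" "p ! Suc i \<in> T1" using s1 1 nth_mem by (metis subsetD)+
    moreover have "v2 \<in> {p ! i, p ! Suc i}" using i(2) by simp
    ultimately have "v2 \<in> T1" by auto
    thus ?thesis using v disj by blast
  next
    case 2
    hence "p ! i = x" "p ! Suc i = y" using junc by (metis diff_Suc_1)+
    hence "{x, y} = {v1, v2}" using i(2) by simp
    moreover have "x \<noteq> v2" using xy v disj by blast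
    ultimately show ?thesis by (auto simp: doubleton_eq_iff)
  next
    case 3
    hence "p ! i = p2 ! (i - length p1)" "p ! Suc i = p2 ! Suc (i - length p1)"
        "Suc (i - length p1) < length p2"
      using i by (auto simp: p_def nth_append Suc_diff_le)
    hence "p ! i \<in> T2" "p ! Suc i \<in> T2" using s2 nth_mem by (metis Suc_lessD subsetD)+
    moreover have "v1 \<in> {p ! i, p ! Suc i}" using i(2) by simp
    ultimately have "v1 \<in> T2" by auto
    thus ?thesis using v disj by blast
  qed
qed



lemma core:
  assumes n3: "n \<ge> 3" and Tsub: "A \<union> B \<subset> hverts n" and disj: "A \<inter> B = {}"
    and balA: "card0 A = card1 A" and balB: "card0 B = card1 B"
    and a: "a \<in> A" and b: "b \<in> B" and ab: "hadj a b" and pa: "parity a = 0"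
    and br: "\<forall>x\<in>A. \<forall>y\<in>B. hadj x y \<longrightarrow> x = a \<and> y = b"
    and out: "\<forall>u\<in>A \<union> B. \<forall>v\<in>hverts n - (A \<union> B). parity u = 0 \<longrightarrow> hadj u v \<longrightarrow> {u, v} \<in> F"
  shows "not_minimal n F"
proof -
  define F' where "F' = {e\<in>F. \<exists>u\<in>B. parity u = 0 \<and> (\<exists>w. w \<notin> B \<and> e = {u,w})}"
  have Av: "A \<subseteq> hverts n" and Bv: "B \<subseteq> hverts n" using Tsub by auto
  have pb: "parity b = 1" using hadj_par0[OF ab pa] .
  have nh: "\<not> has_ham_cycle n F'"
  proof (rule no_ham[OF Bv])
    show "B \<noteq> hverts n" using Tsub by auto
    show "B \<noteq> {}" using b by auto
    show "card0 B = card1 B" by (rule balB)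
    show "\<forall>u\<in>B. \<forall>w\<in>hverts n - B. parity u = 0 \<longrightarrow> hadj u w \<longrightarrow> {u,w} \<in> F'"
    proof (intro ballI impI)
      fix u w assume u: "u \<in> B" and w: "w \<in> hverts n - B" and pu: "parity u = 0" and h: "hadj u w"
      have "w \<notin> A"
      proof
        assume "w \<in> A"
        hence "u = b" using br u hadj_sym[OF h] by blast
        thus False using pu pb by simp
      qed
      hence "{u,w} \<in> F" using out u w pu h by blast
      thus "{u,w} \<in> F'" unfolding F'_def using u w pu by blast
    qed
  qed
  have bA: "b \<notin> A" using b disj by blast
  have "\<exists>x\<in>A. \<exists>w\<in>hverts n - (A \<union> B). parity x = 0 \<and> hadj x w"
  proof (rule ccontr)
    assume nex: "\<not> ?thesis"
    show False
    proof (rule count_contra[OF n3 Av balA a pa bA ab])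
      show "\<forall>x\<in>A. parity x = 0 \<longrightarrow> (\<forall>w\<in>hverts n. hadj x w \<longrightarrow> w \<in> A \<or> (x = a \<and> w = b))"
      proof (intro ballI impI)
        fix x w assume x: "x \<in> A" "parity x = 0" and w: "w \<in> hverts n" "hadj x w"
        show "w \<in> A \<or> (x = a \<and> w = b)"
        proof (cases "w \<in> A \<union> B")
          case True thus ?thesis using br x w by blast
        next
          case False thus ?thesis using nex x w by blast
        qed
      qed
    qed
  qed
  then obtain x w where x: "x \<in> A" "w \<in> hverts n" "w \<notin> A" "w \<notin> B" "parity x = 0" "hadj x w"
    by blast
  have e: "{x,w} \<in> F" using out x by blast
  have xB: "x \<notin> B" using x disj by blast
  have "{x,w} \<notin> F'"
  proof
    assume "{x,w} \<in> F'"
    then obtain u w' where "u \<in> B" "{x,w} = {u,w'}" unfolding F'_def by blast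
    hence "u = x \<or> u = w" by (auto simp: doubleton_eq_iff)
    thus False using \<open>u \<in> B\<close> xB x(4) by blast
  qed
  hence "F' \<subset> F" using e unfolding F'_def by blast
  thus ?thesis using nh by (auto simp: not_minimal_def)
qed

theorem lemma4:
  fixes n :: nat and F T T1 T2 and v1 v2 :: "bool list"
  assumes "n \<ge> 3"
    and "F \<subseteq> hedges n"
    and "T \<subset> hverts n"
    and "card T \<ge> 3"
    and "card0 T \<ge> card1 T"
    and "\<forall>u\<in>T. \<forall>v\<in>hverts n - T. parity u = 0 \<longrightarrow> hadj u v \<longrightarrow> {u, v} \<in> F"
    and "T1 \<union> T2 = T" and "T1 \<inter> T2 = {}"
    and "induces_connected T1" and "induces_connected T2"
    and "card0 T1 = card1 T1" and "card0 T2 = card1 T2"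
    and "v1 \<in> T1" and "v2 \<in> T2" and "hadj v1 v2"
    and "\<forall>p. ipath T p \<and> hd p = v1 \<and> last p = v2 \<longrightarrow> uses_edge p v1 v2"
  shows "not_minimal n F"
proof -
  have P: "\<forall>p. ipath (T1 \<union> T2) p \<and> hd p = v1 \<and> last p = v2 \<longrightarrow> uses_edge p v1 v2"
    using assms(7,16) by simp
  have br: "x = v1 \<and> y = v2" if "x \<in> T1" "y \<in> T2" "hadj x y" for x y
    using bridge[OF assms(8,9,10,13,14) P that] .
  show ?thesis
  proof (cases "parity v1 = 0")
    case True
    show ?thesis
    proof (rule core[OF assms(1) _ assms(8,11,12,13,14,15) True])
      show "T1 \<union> T2 \<subset> hverts n" using assms(3,7) by simp
      show "\<forall>x\<in>T1. \<forall>y\<in>T2. hadj x y \<longrightarrow> x = v1 \<and> y = v2" using br by blast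
      show "\<forall>u\<in>T1 \<union> T2. \<forall>v\<in>hverts n - (T1 \<union> T2). parity u = 0 \<longrightarrow> hadj u v \<longrightarrow> {u, v} \<in> F"
        using assms(6,7) by simp
    qed
  next
    case False
    hence p1: "parity v1 = 1" using parity_le[of v1] by linarith
    have p2: "parity v2 = 0" using hadj_par1[OF assms(15) p1] .
    show ?thesis
    proof (rule core[OF assms(1) _ _ assms(12,11,14,13) hadj_sym[OF assms(15)] p2])
      show "T2 \<union> T1 \<subset> hverts n" using assms(3,7) by (simp add: Un_commute)
      show "T2 \<inter> T1 = {}" using assms(8) by blast
      show "\<forall>x\<in>T2. \<forall>y\<in>T1. hadj x y \<longrightarrow> x = v2 \<and> y = v1" using br hadj_sym by blast
      show "\<forall>u\<in>T2 \<union> T1. \<forall>v\<in>hverts n - (T2 \<union> T1). parity u = 0 \<longrightarrow> hadj u v \<longrightarrow> {u, v} \<in> F"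
        using assms(6,7) by (simp add: Un_commute)
    qed
  qed
qed


end
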